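(* Let $n\ge1$. A permutation $w\in\mathfrak S_n$ has $\operatorname{exc}(w)=k$ if and only if $w$ can be written as a product of $k$ permutations each having exactly one excedance, and not as a product of fewer such permutations; that is, $\operatorname{exc}=\ell_T$ where $T=\{t\in\mathfrak S_n:\operatorname{exc}(t)=1\}$. Furthermore, $\operatorname{exc}$ is subadditive, and the poset $(\mathfrak S_n,\le_{\operatorname{exc}})$, where $x\le_{\operatorname{exc}}y$ iff $\operatorname{exc}(x)+\operatorname{exc}(x^{-1}y)=\operatorname{exc}(y)$, is graded by $\operatorname{exc}$ (every cover relation $x\lessdot y$ has $\operatorname{exc}(y)=\operatorname{exc}(x)+1$), the number of elements of rank $k$ is the Eulerian number counting permutations of $[n]$ with $k$ excedances, and it has a unique maximal element, namely $23\cdots n1=(1\,2\,\cdots\,n)$.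
   Context: For $w\in\mathfrak S_n$, $\operatorname{exc}(w)=\#\{i\in[n-1]: w(i)>i\}$ is the number of excedances. Permutations are composed as functions. $\ell_T(x)$ is the minimum number of elements of $T$ whose product is $x$. *)

theory Defs
  imports "HOL-Combinatorics.Permutations"
begin

definition Sn :: "nat \<Rightarrow> (nat \<Rightarrow> nat) set" where
  "Sn n = {w. w permutes {1..n}}"

definition exc :: "nat \<Rightarrow> (nat \<Rightarrow> nat) \<Rightarrow> nat" where
  "exc n w = card {i \<in> {1..n-1}. w i > i}"

definition Texc :: "nat \<Rightarrow> (nat \<Rightarrow> nat) set" where
  "Texc n = {t \<in> Sn n. exc n t = 1}"

definition listprod :: "(nat \<Rightarrow> nat) list \<Rightarrow> (nat \<Rightarrow> nat)" where
  "listprod ts = foldr (\<circ>) ts id"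

definition lenT :: "(nat \<Rightarrow> nat) set \<Rightarrow> (nat \<Rightarrow> nat) \<Rightarrow> nat" where
  "lenT T x = (LEAST k. \<exists>ts. length ts = k \<and> set ts \<subseteq> T \<and> listprod ts = x)"

definition le_exc :: "nat \<Rightarrow> (nat \<Rightarrow> nat) \<Rightarrow> (nat \<Rightarrow> nat) \<Rightarrow> bool" where
  "le_exc n x y \<longleftrightarrow> exc n x + exc n (inv x \<circ> y) = exc n y"

definition lt_exc :: "nat \<Rightarrow> (nat \<Rightarrow> nat) \<Rightarrow> (nat \<Rightarrow> nat) \<Rightarrow> bool" where
  "lt_exc n x y \<longleftrightarrow> le_exc n x y \<and> x \<noteq> y"

definition covers_exc :: "nat \<Rightarrow> (nat \<Rightarrow> nat) \<Rightarrow> (nat \<Rightarrow> nat) \<Rightarrow> bool" where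
  "covers_exc n x y \<longleftrightarrow> x \<in> Sn n \<and> y \<in> Sn n \<and> lt_exc n x y \<and>
     \<not> (\<exists>z \<in> Sn n. lt_exc n x z \<and> lt_exc n z y)"

definition maximal_exc :: "nat \<Rightarrow> (nat \<Rightarrow> nat) \<Rightarrow> bool" where
  "maximal_exc n y \<longleftrightarrow> y \<in> Sn n \<and> (\<forall>z \<in> Sn n. le_exc n y z \<longrightarrow> z = y)"

definition eulerian :: "nat \<Rightarrow> nat \<Rightarrow> nat" where
  "eulerian n k = card {w \<in> Sn n. exc n w = k}"

text \<open>The long cycle (1 2 ... n), i.e. one-line notation 2 3 ... n 1.\<close>
definition longcycle :: "nat \<Rightarrow> nat \<Rightarrow> nat" where
  "longcycle n i = (if 1 \<le> i \<and> i < n then i + 1 else if i = n then 1 else i)"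

end

theory Submission imports Defs begin

definition E :: "(nat \<Rightarrow> nat) \<Rightarrow> nat set" where "E w = {i. w i > i}"

lemma E_sub: "w permutes {1..n} \<Longrightarrow> E w \<subseteq> {1..n-1}"
proof
  fix i assume p: "w permutes {1..n}" and i: "i \<in> E w"
  hence gt: "w i > i" by (simp add: E_def)
  have iin: "i \<in> {1..n}" using gt permutes_not_in[OF p] by (metis less_irrefl)
  hence "w i \<in> {1..n}" using permutes_in_image[OF p] by blast
  thus "i \<in> {1..n-1}" using iin gt by auto
qed

lemma fin_E: "w permutes {1..n} \<Longrightarrow> finite (E w)"
  using E_sub finite_subset by blast

lemma exc_eq: "w permutes {1..n} \<Longrightarrow> exc n w = card (E w)"
proof -
  assume p: "w permutes {1..n}"
  have "{i \<in> {1..n-1}. w i > i} = E w" using E_sub[OF p] by (auto simp: E_def)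
  thus ?thesis by (simp add: exc_def)
qed

lemma exc_le: "exc n w \<le> n - 1"
proof -
  have "exc n w \<le> card {1..n-1}" unfolding exc_def by (rule card_mono) auto
  thus ?thesis by simp
qed

lemma E_comp: "card (E (x \<circ> y)) \<le> card (E x) + card (E y)"
  if px: "x permutes {1..n}" and py: "y permutes {1..n}" for x y n
proof -
  let ?B = "{i. y i \<le> i \<and> x (y i) > i}"
  have sub: "E (x \<circ> y) \<subseteq> E y \<union> ?B" by (auto simp: E_def)
  have finB: "finite ?B"
    by (rule finite_subset[OF _ fin_E[OF permutes_compose[OF py px]]]) (auto simp: E_def)
  have "card ?B \<le> card (E x)"
  proof (rule card_inj_on_le[where f=y])
    show "inj_on y ?B" using permutes_inj[OF py] by (simp add: inj_on_def inj_def)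
    show "y ` ?B \<subseteq> E x" by (auto simp: E_def)
    show "finite (E x)" by (rule fin_E[OF px])
  qed
  have "card (E (x \<circ> y)) \<le> card (E y \<union> ?B)"
    by (rule card_mono) (use sub fin_E[OF py] finB in auto)
  also have "\<dots> \<le> card (E y) + card ?B" by (rule card_Un_le)
  finally show ?thesis using \<open>card ?B \<le> card (E x)\<close> by simp
qed

lemma E_empty_id:
  assumes p: "w permutes {1..n}" and e: "E w = {}" shows "w = id"
proof (rule ccontr)
  assume "w \<noteq> id"
  then have ex: "\<exists>i. w i \<noteq> i" by auto
  define i where "i = (LEAST i. w i \<noteq> i)"
  have wi: "w i \<noteq> i" unfolding i_def by (rule LeastI_ex[OF ex])
  have fx: "\<And>j. j < i \<Longrightarrow> w j = j" unfolding i_def using not_less_Least by blast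
  have "\<not> w i < i"
  proof
    assume "w i < i"
    then have "w (w i) = w i" by (rule fx)
    then have "w i = i" using permutes_inj[OF p] by (simp add: inj_def)
    with wi show False by simp
  qed
  then have "w i > i" using wi by simp
  with e show False by (auto simp: E_def)
qed


lemma step_lemma:
  "\<forall>w a. w permutes {1..n} \<longrightarrow> w a = m \<longrightarrow> a < m \<longrightarrow> (\<forall>c>a. w c \<le> c) \<longrightarrow>
    (\<exists>t w'. t permutes {1..n} \<and> w' permutes {1..n} \<and> w = w' \<circ> t \<and> t a = w a \<and>
       (\<forall>c. c \<noteq> a \<longrightarrow> t c \<le> c) \<and> (\<forall>c > w a. t c = c) \<and> E w' = E w - {a})"
proof (induction m rule: less_induct)
  case (less m)
  show ?case
  proof (intro allI impI)
    fix w a assume p: "w permutes {1..n}" and wa: "w a = m" and am: "a < m" and nc: "\<forall>c>a. w c \<le> c"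
    define b where "b = w a"
    have ain: "a \<in> {1..n}" using am wa permutes_not_in[OF p] by (metis less_irrefl)
    have bin: "b \<in> {1..n}" using ain permutes_in_image[OF p] b_def by blast
    have ab: "a < b" using am wa b_def by simp
    have wbb: "w b < b"
    proof -
      have "w b \<le> b" using nc ab by blast
      moreover have "w b \<noteq> b" using permutes_inj[OF p] ab b_def by (metis inj_def less_irrefl)
      ultimately show ?thesis by simp
    qed
    have tp: "transpose a b permutes {1..n}" by (rule permutes_swap_id[OF ain bin])
    show "\<exists>t w'. t permutes {1..n} \<and> w' permutes {1..n} \<and> w = w' \<circ> t \<and> t a = w a \<and>
       (\<forall>c. c \<noteq> a \<longrightarrow> t c \<le> c) \<and> (\<forall>c > w a. t c = c) \<and> E w' = E w - {a}"
    proof (cases "w b \<le> a")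
      case True
      define w' where "w' = w \<circ> transpose a b"
      have "w = w' \<circ> transpose a b" by (simp add: w'_def comp_assoc)
      moreover have "w' permutes {1..n}" unfolding w'_def by (rule permutes_compose[OF tp p])
      moreover have "E w' = E w - {a}"
      proof -
        have "i \<in> E w' \<longleftrightarrow> i \<in> E w - {a}" for i
          using True ab wbb b_def unfolding E_def w'_def
          by (cases "i = a"; cases "i = b") simp_all
        thus ?thesis by blast
      qed
      moreover have "transpose a b a = w a" using b_def by simp
      moreover have "\<forall>c. c \<noteq> a \<longrightarrow> transpose a b c \<le> c" 
      proof (intro allI impI)
        fix c assume "c \<noteq> a" then show "transpose a b c \<le> c" using ab by (cases "c = b") simp_all
      qed
      moreover have "\<forall>c > w a. transpose a b c = c" 
      proof (intro allI impI)
        fix c assume "c > w a" then have "c \<noteq> a" "c \<noteq> b" using ab b_def by auto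
        then show "transpose a b c = c" by simp
      qed
      ultimately show ?thesis using tp by blast
    next
      case False
      define w1 where "w1 = w \<circ> transpose a b"
      have p1: "w1 permutes {1..n}" unfolding w1_def by (rule permutes_compose[OF tp p])
      have w1a: "w1 a = w b" by (simp add: w1_def)
      have nc1: "\<forall>c>a. w1 c \<le> c" 
      proof (intro allI impI)
        fix c assume ca: "c > a"
        show "w1 c \<le> c"
        proof (cases "c = b")
          case True then show ?thesis using b_def by (simp add: w1_def)
        next
          case False then have "w1 c = w c" using ca by (simp add: w1_def)
          then show ?thesis using nc ca by simp
        qed
      qed
      have "w b < m" using wbb b_def wa by simp
      have IH: "\<exists>t w'. t permutes {1..n} \<and> w' permutes {1..n} \<and> w1 = w' \<circ> t \<and> t a = w1 a \<and>
       (\<forall>c. c \<noteq> a \<longrightarrow> t c \<le> c) \<and> (\<forall>c > w1 a. t c = c) \<and> E w' = E w1 - {a}"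
        by (rule less[rule_format, OF \<open>w b < m\<close> p1 w1a]) (use False nc1 in auto)
      from IH obtain t1 w' where t1p: "t1 permutes {1..n}" and w'p: "w' permutes {1..n}"
        and w1e: "w1 = w' \<circ> t1" and t1a: "t1 a = w1 a" and t1le: "\<forall>c. c \<noteq> a \<longrightarrow> t1 c \<le> c"
        and t1f: "\<forall>c > w1 a. t1 c = c" and Ew': "E w' = E w1 - {a}" by blast
      define t where "t = t1 \<circ> transpose a b"
      have "w = w1 \<circ> transpose a b" by (simp add: w1_def comp_assoc)
      hence "w = w' \<circ> t" by (simp add: w1e t_def comp_assoc)
      moreover have "t permutes {1..n}" unfolding t_def by (rule permutes_compose[OF tp t1p])
      moreover have t1b: "t1 b = b" using t1f w1a wbb by simp
      moreover have "t a = w a" using t1b b_def by (simp add: t_def)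
      moreover have "\<forall>c. c \<noteq> a \<longrightarrow> t c \<le> c"
      proof (intro allI impI)
        fix c assume ca: "c \<noteq> a"
        show "t c \<le> c"
        proof (cases "c = b")
          case True
          then have "t c = t1 a" by (simp add: t_def)
          then show ?thesis using t1a w1a wbb True by simp
        next
          case False
          then have "t c = t1 c" using ca by (simp add: t_def)
          then show ?thesis using t1le ca by simp
        qed
      qed
      moreover have "\<forall>c > w a. t c = c"
      proof (intro allI impI)
        fix c assume cg: "c > w a"
        then have cab: "c \<noteq> a" "c \<noteq> b" using ab b_def by auto
        then have "t c = t1 c" by (simp add: t_def)
        also have "\<dots> = c" using t1f w1a wbb cg b_def by simp
        finally show "t c = c" .
      qed
      moreover have "E w1 = E w"
      proof -
        have "i \<in> E w1 \<longleftrightarrow> i \<in> E w" for i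
          using False ab wbb b_def unfolding E_def w1_def
          by (cases "i = a"; cases "i = b") simp_all
        thus ?thesis by blast
      qed
      moreover note w'p
      moreover have "E w' = E w - {a}" using Ew' \<open>E w1 = E w\<close> by simp
      ultimately show ?thesis by blast
    qed
  qed
qed


lemma listprod_Nil[simp]: "listprod [] = id" by (simp add: listprod_def)
lemma listprod_Cons[simp]: "listprod (t # ts) = t \<circ> listprod ts" by (simp add: listprod_def)
lemma listprod_snoc: "listprod (ts @ [t]) = listprod ts \<circ> t"
  by (induction ts) (simp_all add: comp_assoc)

lemma Sn_perm: "w \<in> Sn n \<longleftrightarrow> w permutes {1..n}" by (simp add: Sn_def)

lemma exc_id[simp]: "exc n id = 0" by (simp add: exc_def)

lemma id_Sn: "id \<in> Sn n" by (simp add: Sn_def permutes_id)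

lemma comp_Sn: "x \<in> Sn n \<Longrightarrow> y \<in> Sn n \<Longrightarrow> x \<circ> y \<in> Sn n"
  by (simp add: Sn_def permutes_compose)

lemma inv_Sn: "x \<in> Sn n \<Longrightarrow> inv x \<in> Sn n"
  by (simp add: Sn_def permutes_inv)

lemma inv_comp1: "x \<in> Sn n \<Longrightarrow> inv x \<circ> x = id"
  by (simp add: Sn_def permutes_inv_o)
lemma inv_comp2: "x \<in> Sn n \<Longrightarrow> x \<circ> inv x = id"
  by (simp add: Sn_def permutes_inv_o)

lemma exc_sub: "x \<in> Sn n \<Longrightarrow> y \<in> Sn n \<Longrightarrow> exc n (x \<circ> y) \<le> exc n x + exc n y"
  using E_comp[of x n y] exc_eq[of x n] exc_eq[of y n] exc_eq[of "x \<circ> y" n]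
  by (simp add: Sn_def permutes_compose)

lemma exc0: "w \<in> Sn n \<Longrightarrow> exc n w = 0 \<Longrightarrow> w = id"
  using exc_eq[of w n] fin_E[of w n] E_empty_id[of w n] by (simp add: Sn_def)

lemma Texc_Sn: "set ts \<subseteq> Texc n \<Longrightarrow> listprod ts \<in> Sn n \<and> exc n (listprod ts) \<le> length ts"
proof (induction ts)
  case Nil then show ?case using id_Sn[of n] exc_id[of n] by (simp add: id_def)
next
  case (Cons t ts)
  then have t: "t \<in> Sn n" "exc n t = 1" and ih: "listprod ts \<in> Sn n" "exc n (listprod ts) \<le> length ts"
    by (auto simp: Texc_def)
  have "exc n (t \<circ> listprod ts) \<le> exc n t + exc n (listprod ts)" by (rule exc_sub[OF t(1) ih(1)])
  moreover have "t \<circ> listprod ts \<in> Sn n" by (rule comp_Sn[OF t(1) ih(1)])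
  moreover have "exc n (t \<circ> listprod ts) \<le> length (t # ts)" using calculation(1) t(2) ih(2) by simp
  ultimately show ?case unfolding listprod_Cons by blast
qed

lemma factor: "\<forall>w \<in> Sn n. exc n w = k \<longrightarrow> (\<exists>ts. length ts = k \<and> set ts \<subseteq> Texc n \<and> listprod ts = w)"
proof (induction k)
  case 0
  show ?case
  proof (intro ballI impI)
    fix w assume "w \<in> Sn n" "exc n w = 0"
    then have "w = id" by (rule exc0)
    then show "\<exists>ts. length ts = 0 \<and> set ts \<subseteq> Texc n \<and> listprod ts = w"
      by (intro exI[of _ "[]"]) simp
  qed
next
  case (Suc k)
  show ?case
  proof (intro ballI impI)
    fix w assume wS: "w \<in> Sn n" and ek: "exc n w = Suc k"
    have p: "w permutes {1..n}" using wS by (simp add: Sn_def)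
    have cE: "card (E w) = Suc k" using exc_eq[OF p] ek by simp
    have fE: "finite (E w)" by (rule fin_E[OF p])
    have ne: "E w \<noteq> {}" using cE by auto
    define a where "a = Max (E w)"
    have aE: "a \<in> E w" unfolding a_def using Max_in[OF fE ne] .
    then have wa: "a < w a" by (simp add: E_def)
    have nc: "\<forall>c>a. w c \<le> c"
    proof (intro allI impI)
      fix c assume "a < c"
      then have "c \<notin> E w" using Max_ge[OF fE] a_def by (metis not_le)
      then show "w c \<le> c" by (simp add: E_def)
    qed
    obtain t w' where tp: "t permutes {1..n}" and w'p: "w' permutes {1..n}" and we: "w = w' \<circ> t"
      and ta: "t a = w a" and tle: "\<forall>c. c \<noteq> a \<longrightarrow> t c \<le> c" and Ew': "E w' = E w - {a}"
      using step_lemma[of n "w a", rule_format, OF p refl wa nc[rule_format]] by blast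
    have Et: "E t = {a}"
    proof -
      have "i \<in> E t \<longleftrightarrow> i = a" for i
        using ta wa tle by (cases "i = a") (auto simp: E_def not_less)
      then show ?thesis by blast
    qed
    have tT: "t \<in> Texc n" using exc_eq[OF tp] Et tp by (simp add: Texc_def Sn_def)
    have "exc n w' = k" using exc_eq[OF w'p] Ew' cE aE fE by simp
    then obtain ts where "length ts = k" "set ts \<subseteq> Texc n" "listprod ts = w'"
      using Suc.IH w'p by (auto simp: Sn_def)
    then show "\<exists>ts. length ts = Suc k \<and> set ts \<subseteq> Texc n \<and> listprod ts = w"
      using tT we by (intro exI[of _ "ts @ [t]"]) (simp add: listprod_snoc)
  qed
qed

lemma longcycle_Sn:
  assumes n: "n \<ge> 1" shows "longcycle n \<in> Sn n"
proof -
  define d where "d i = (if 2 \<le> i \<and> i \<le> n then i - 1 else if i = 1 then n else i)" for i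
  have "bij_betw (longcycle n) {1..n} {1..n}"
    by (rule bij_betw_byWitness[where f' = d]) (use n in \<open>auto simp: d_def longcycle_def\<close>)
  moreover have "\<And>x. x \<notin> {1..n} \<Longrightarrow> longcycle n x = x" using n by (auto simp: longcycle_def)
  ultimately show ?thesis unfolding Sn_def using bij_imp_permutes by blast
qed

lemma exc_longcycle: "exc n (longcycle n) = n - 1"
proof -
  have "{i \<in> {1..n-1}. longcycle n i > i} = {1..n-1}" by (auto simp: longcycle_def)
  then show ?thesis by (simp add: exc_def)
qed

lemma exc_le_c:
  assumes n: "n \<ge> 1" and yS: "y \<in> Sn n"
  shows "exc n y + exc n (inv y \<circ> longcycle n) \<le> n - 1"
proof -
  have p: "y permutes {1..n}" using yS by (simp add: Sn_def)
  have ip: "inv y permutes {1..n}" by (rule permutes_inv[OF p])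
  define A where "A = {i \<in> {1..n-1}. (inv y \<circ> longcycle n) i > i}"
  define D where "D = ({1..n} - E y) - {inv y 1}"
  have "card A \<le> card D"
  proof (rule card_inj_on_le[where f = "\<lambda>i. inv y (i + 1)"])
    show "inj_on (\<lambda>i. inv y (i + 1)) A"
      using permutes_inj[OF ip] by (auto simp: inj_on_def inj_def)
    show "finite D" by (simp add: D_def)
    show "(\<lambda>i. inv y (i + 1)) ` A \<subseteq> D"
    proof
      fix m assume "m \<in> (\<lambda>i. inv y (i + 1)) ` A"
      then obtain i where iA: "i \<in> A" and m: "m = inv y (i + 1)" by blast
      have i1: "1 \<le> i" "i < n" using iA n by (auto simp: A_def)
      have ci: "longcycle n i = i + 1" using i1 by (simp add: longcycle_def)
      have mi: "m > i" using iA ci m by (simp add: A_def)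
      have ym: "y m = i + 1" using m permutes_inverses(1)[OF p] by simp
      have "i + 1 \<in> {1..n}" using i1 by simp
      then have mS: "m \<in> {1..n}" using m permutes_in_image[OF ip] by simp
      have "m \<notin> E y" using ym mi by (simp add: E_def)
      moreover have "m \<noteq> inv y 1"
      proof
        assume "m = inv y 1"
        then have "y m = 1" using permutes_inverses(1)[OF p] by simp
        with ym i1 show False by simp
      qed
      ultimately show "m \<in> D" using mS by (simp add: D_def)
    qed
  qed
  moreover have "card D = n - card (E y) - 1"
  proof -
    have "1 \<in> {1..n}" using n by simp
    then have i1: "inv y 1 \<in> {1..n}" using permutes_in_image[OF ip] by simp
    have "y (inv y 1) = 1" by (rule permutes_inverses(1)[OF p])
    then have "inv y 1 \<notin> E y" using i1 by (auto simp: E_def)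
    then have "inv y 1 \<in> {1..n} - E y" using i1 by simp
    then have "card D = card ({1..n} - E y) - 1" unfolding D_def by (simp add: card_Diff_singleton)
    moreover have "card ({1..n} - E y) = n - card (E y)"
    proof -
      have "{1..n-1} \<subseteq> {1..n}" by auto
      then have "E y \<subseteq> {1..n}" using E_sub[OF p] by blast
      then show ?thesis using card_Diff_subset[of "E y" "{1..n}"] fin_E[OF p] by simp
    qed
    ultimately show ?thesis by simp
  qed
  moreover have "exc n (inv y \<circ> longcycle n) = card A" by (simp add: exc_def A_def)
  ultimately show ?thesis using exc_eq[OF p] exc_le[of n y] by simp
qed


lemma cancel_l: "x \<in> Sn n \<Longrightarrow> x \<circ> (inv x \<circ> y) = y"
proof -
  assume xS: "x \<in> Sn n"
  have "x \<circ> (inv x \<circ> y) = (x \<circ> inv x) \<circ> y" by (rule comp_assoc[symmetric])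
  also have "\<dots> = y" using inv_comp2[OF xS] by simp
  finally show ?thesis .
qed

lemma cancel_l2: "x \<in> Sn n \<Longrightarrow> inv x \<circ> (x \<circ> y) = y"
proof -
  assume xS: "x \<in> Sn n"
  have "inv x \<circ> (x \<circ> y) = (inv x \<circ> x) \<circ> y" by (rule comp_assoc[symmetric])
  also have "\<dots> = y" using inv_comp1[OF xS] by simp
  finally show ?thesis .
qed

lemma le_exc_trans:
  assumes S: "x \<in> Sn n" "y \<in> Sn n" "z \<in> Sn n" and h: "le_exc n x y" "le_exc n y z"
  shows "le_exc n x z"
proof -
  have e1: "inv x \<circ> z = (inv x \<circ> y) \<circ> (inv y \<circ> z)"
    by (simp add: comp_assoc cancel_l[OF S(2)])
  have "exc n (inv x \<circ> z) \<le> exc n (inv x \<circ> y) + exc n (inv y \<circ> z)"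
    unfolding e1 by (rule exc_sub) (use S inv_Sn comp_Sn in auto)
  moreover have "exc n z \<le> exc n x + exc n (inv x \<circ> z)"
  proof -
    have "z = x \<circ> (inv x \<circ> z)" by (rule cancel_l[OF S(1), symmetric])
    then have "exc n z = exc n (x \<circ> (inv x \<circ> z))" by simp
    also have "\<dots> \<le> exc n x + exc n (inv x \<circ> z)" by (rule exc_sub) (use S inv_Sn comp_Sn in auto)
    finally show ?thesis .
  qed
  ultimately show ?thesis using h by (simp add: le_exc_def)
qed

lemma covers_lemma:
  assumes c: "covers_exc n x y" shows "exc n y = exc n x + 1"
proof -
  have xS: "x \<in> Sn n" and yS: "y \<in> Sn n" and lt: "lt_exc n x y"
    and nz: "\<not> (\<exists>z \<in> Sn n. lt_exc n x z \<and> lt_exc n z y)" using c by (auto simp: covers_exc_def)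
  define u where "u = inv x \<circ> y"
  have uS: "u \<in> Sn n" unfolding u_def using xS yS inv_Sn comp_Sn by blast
  have le: "exc n x + exc n u = exc n y" and xy: "x \<noteq> y" using lt by (auto simp: lt_exc_def le_exc_def u_def)
  have yxu: "y = x \<circ> u" unfolding u_def by (rule cancel_l[OF xS, symmetric])
  define m where "m = exc n u"
  have "m \<noteq> 0"
  proof
    assume "m = 0" then have "u = id" using exc0[OF uS] m_def by simp
    with yxu xy show False by simp
  qed
  moreover have "\<not> m \<ge> 2"
  proof
    assume m2: "m \<ge> 2"
    obtain ts where lts: "length ts = m" and sT: "set ts \<subseteq> Texc n" and lp: "listprod ts = u"
      using factor[of n m] uS m_def by blast
    obtain t rest where tsd: "ts = t # rest" using lts m2 by (cases ts) auto
    have tT: "t \<in> Sn n" "exc n t = 1" using sT tsd by (auto simp: Texc_def)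
    have rS: "listprod rest \<in> Sn n" and rl: "exc n (listprod rest) \<le> m - 1"
      using Texc_Sn[of rest n] sT tsd lts by auto
    have ue: "u = t \<circ> listprod rest" using lp tsd by simp
    define z where "z = x \<circ> t"
    have zS: "z \<in> Sn n" unfolding z_def using comp_Sn xS tT by blast
    have ezle: "exc n z \<le> exc n x + 1" using exc_sub[OF xS tT(1)] tT z_def by simp
    have yz: "y = z \<circ> listprod rest" using yxu ue z_def by (simp add: comp_assoc)
    have "exc n y \<le> exc n z + exc n (listprod rest)" using exc_sub[OF zS rS] yz by simp
    then have ez: "exc n z = exc n x + 1" using ezle rl le m_def m2 by linarith
    have izx: "inv x \<circ> z = t" unfolding z_def by (rule cancel_l2[OF xS])
    have izy: "inv z \<circ> y = listprod rest"
      unfolding yz by (rule cancel_l2[OF zS])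
    have erest: "exc n (listprod rest) = m - 1"
      using \<open>exc n y \<le> exc n z + exc n (listprod rest)\<close> ez rl le m_def by linarith
    have "lt_exc n x z"
    proof -
      have "le_exc n x z" using ez izx tT by (simp add: le_exc_def)
      moreover have "x \<noteq> z" using ez by auto
      ultimately show ?thesis by (simp add: lt_exc_def)
    qed
    moreover have "lt_exc n z y"
    proof -
      have "le_exc n z y" using ez izy erest le m_def m2 by (simp add: le_exc_def)
      moreover have "z \<noteq> y" using ez le m_def m2 by auto
      ultimately show ?thesis by (simp add: lt_exc_def)
    qed
    ultimately show False using nz zS by blast
  qed
  ultimately have "m = 1" by simp
  then show ?thesis using le m_def by simp
qed

theorem mainTheorem17:
  fixes n :: nat
  assumes "n \<ge> 1"
  shows
    "(\<forall>w \<in> Sn n. \<forall>k.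
        exc n w = k \<longleftrightarrow>
          ((\<exists>ts. length ts = k \<and> set ts \<subseteq> Texc n \<and> listprod ts = w) \<and>
           (\<forall>ts. length ts < k \<longrightarrow> set ts \<subseteq> Texc n \<longrightarrow> listprod ts \<noteq> w)))
   \<and> (\<forall>w \<in> Sn n. exc n w = lenT (Texc n) w)
   \<and> (\<forall>x \<in> Sn n. \<forall>y \<in> Sn n. exc n (x \<circ> y) \<le> exc n x + exc n y)
   \<and> (\<forall>x \<in> Sn n. le_exc n x x)
   \<and> (\<forall>x \<in> Sn n. \<forall>y \<in> Sn n. le_exc n x y \<and> le_exc n y x \<longrightarrow> x = y)
   \<and> (\<forall>x \<in> Sn n. \<forall>y \<in> Sn n. \<forall>z \<in> Sn n. le_exc n x y \<and> le_exc n y z \<longrightarrow> le_exc n x z)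
   \<and> (\<forall>x \<in> Sn n. le_exc n id x) \<and> exc n id = 0
   \<and> (\<forall>x y. covers_exc n x y \<longrightarrow> exc n y = exc n x + 1)
   \<and> (\<forall>k. card {w \<in> Sn n. exc n w = k} = eulerian n k)
   \<and> {y. maximal_exc n y} = {longcycle n}"
proof -
  have P1: "\<forall>w \<in> Sn n. \<forall>k.
        exc n w = k \<longleftrightarrow>
          ((\<exists>ts. length ts = k \<and> set ts \<subseteq> Texc n \<and> listprod ts = w) \<and>
           (\<forall>ts. length ts < k \<longrightarrow> set ts \<subseteq> Texc n \<longrightarrow> listprod ts \<noteq> w))"
  proof (intro ballI allI iffI)
    fix w k assume wS: "w \<in> Sn n" and ek: "exc n w = k"
    show "(\<exists>ts. length ts = k \<and> set ts \<subseteq> Texc n \<and> listprod ts = w) \<and>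
           (\<forall>ts. length ts < k \<longrightarrow> set ts \<subseteq> Texc n \<longrightarrow> listprod ts \<noteq> w)"
    proof (intro conjI allI impI)
      show "\<exists>ts. length ts = k \<and> set ts \<subseteq> Texc n \<and> listprod ts = w" using factor[of n k] wS ek by blast
    next
      fix ts :: "(nat \<Rightarrow> nat) list" assume "length ts < k" "set ts \<subseteq> Texc n"
      then show "listprod ts \<noteq> w" using Texc_Sn[of ts n] ek by auto
    qed
  next
    fix w k assume wS: "w \<in> Sn n" and h: "(\<exists>ts. length ts = k \<and> set ts \<subseteq> Texc n \<and> listprod ts = w) \<and>
           (\<forall>ts. length ts < k \<longrightarrow> set ts \<subseteq> Texc n \<longrightarrow> listprod ts \<noteq> w)"
    then obtain ts where "length ts = k" "set ts \<subseteq> Texc n" "listprod ts = w" by blast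
    then have le: "exc n w \<le> k" using Texc_Sn[of ts n] by auto
    obtain ts' where "length ts' = exc n w" "set ts' \<subseteq> Texc n" "listprod ts' = w"
      using factor[of n "exc n w"] wS by blast
    then have "\<not> exc n w < k" using h by metis
    then show "exc n w = k" using le by simp
  qed
  have P2: "\<forall>w \<in> Sn n. exc n w = lenT (Texc n) w"
  proof
    fix w assume wS: "w \<in> Sn n"
    show "exc n w = lenT (Texc n) w" unfolding lenT_def
    proof (rule Least_equality[symmetric])
      show "\<exists>ts. length ts = exc n w \<and> set ts \<subseteq> Texc n \<and> listprod ts = w"
        using factor[of n "exc n w"] wS by blast
    next
      fix k assume "\<exists>ts. length ts = k \<and> set ts \<subseteq> Texc n \<and> listprod ts = w"
      then show "exc n w \<le> k" using Texc_Sn by blast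
    qed
  qed
  have P3: "\<forall>x \<in> Sn n. \<forall>y \<in> Sn n. exc n (x \<circ> y) \<le> exc n x + exc n y" using exc_sub by blast
  have P4: "\<forall>x \<in> Sn n. le_exc n x x" using inv_comp1 by (simp add: le_exc_def)
  have P5: "\<forall>x \<in> Sn n. \<forall>y \<in> Sn n. le_exc n x y \<and> le_exc n y x \<longrightarrow> x = y"
  proof (intro ballI impI)
    fix x y assume xS: "x \<in> Sn n" and yS: "y \<in> Sn n" and h: "le_exc n x y \<and> le_exc n y x"
    then have "exc n (inv x \<circ> y) = 0" by (simp add: le_exc_def)
    then have "inv x \<circ> y = id" using exc0 inv_Sn comp_Sn xS yS by blast
    then have "x \<circ> (inv x \<circ> y) = x" by simp
    then show "x = y" using cancel_l[OF xS, of y] by simp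
  qed
  have P6: "\<forall>x \<in> Sn n. \<forall>y \<in> Sn n. \<forall>z \<in> Sn n. le_exc n x y \<and> le_exc n y z \<longrightarrow> le_exc n x z"
    using le_exc_trans by blast
  have P7: "\<forall>x \<in> Sn n. le_exc n id x" by (simp add: le_exc_def)
  have P8: "\<forall>x y. covers_exc n x y \<longrightarrow> exc n y = exc n x + 1" using covers_lemma by blast
  have P9: "\<forall>k. card {w \<in> Sn n. exc n w = k} = eulerian n k" by (simp add: eulerian_def)
  have P10: "{y. maximal_exc n y} = {longcycle n}"
  proof
    have cS: "longcycle n \<in> Sn n" by (rule longcycle_Sn[OF assms])
    show "{longcycle n} \<subseteq> {y. maximal_exc n y}"
    proof -
      have "\<forall>z \<in> Sn n. le_exc n (longcycle n) z \<longrightarrow> z = longcycle n"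
      proof (intro ballI impI)
        fix z assume zS: "z \<in> Sn n" and h: "le_exc n (longcycle n) z"
        then have "exc n (inv (longcycle n) \<circ> z) = 0"
          using exc_longcycle[of n] exc_le[of n z] by (simp add: le_exc_def)
        then have "inv (longcycle n) \<circ> z = id" using exc0 inv_Sn comp_Sn cS zS by blast
        then have "longcycle n \<circ> (inv (longcycle n) \<circ> z) = longcycle n" by simp
        then show "z = longcycle n" using cancel_l[OF cS, of z] by simp
      qed
      then show ?thesis using cS by (simp add: maximal_exc_def)
    qed
    show "{y. maximal_exc n y} \<subseteq> {longcycle n}"
    proof
      fix y assume "y \<in> {y. maximal_exc n y}"
      then have yS: "y \<in> Sn n" and mx: "\<forall>z \<in> Sn n. le_exc n y z \<longrightarrow> z = y" by (auto simp: maximal_exc_def)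
      have "exc n (longcycle n) \<le> exc n y + exc n (inv y \<circ> longcycle n)"
      proof -
        have "longcycle n = y \<circ> (inv y \<circ> longcycle n)" by (rule cancel_l[OF yS, symmetric])
        then have "exc n (longcycle n) = exc n (y \<circ> (inv y \<circ> longcycle n))" by simp
        also have "\<dots> \<le> exc n y + exc n (inv y \<circ> longcycle n)"
          by (rule exc_sub) (use yS cS inv_Sn comp_Sn in auto)
        finally show ?thesis .
      qed
      then have "le_exc n y (longcycle n)"
        using exc_le_c[OF assms yS] exc_longcycle[of n] by (simp add: le_exc_def)
      then show "y \<in> {longcycle n}" using mx cS by auto
    qed
  qed
  show ?thesis
    apply (intro conjI)
    apply (fact P1)
    apply (fact P2)
    apply (fact P3)
    apply (fact P4)
    apply (fact P5)
    apply (fact P6)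
    apply (fact P7)
    apply (fact exc_id)
    apply (fact P8)
    apply (fact P9)
    apply (fact P10)
    done
qed

end
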